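(* Let $G$ be a profinite group and $H\subseteq G$ an open subgroup (of finite index). Let $X$ and $Y$ be discrete $G$-modules and let $f:X\to Y$ be a homomorphism that is $H$-linear (but not necessarily $G$-linear). Define the $G$-linear map $\tilde f:X\to Y$ by $\tilde f(x)=\sum_{gH\in G/H}g f g^{-1}(x)$. Then for every $n\geq 0$ and every $\sigma\in H^n(G,X)$, $$\operatorname{Cor}_H^G\big(f_*\operatorname{Res}_H^G\sigma\big)=\tilde f_*\sigma.$$
   Context: $\operatorname{Res}_H^G$ and $\operatorname{Cor}_H^G$ denote restriction and corestriction in continuous group cohomology; $f_*$ denotes the map on cohomology induced by a module homomorphism. The term $gfg^{-1}$ depends only on the coset $gH$ since $f$ is $H$-linear. *)

theory Defs
  imports "HOL-Analysis.Analysis" "HOL-Algebra.Coset"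
begin

definition totally_disconnected_space :: "'a topology \<Rightarrow> bool" where
  "totally_disconnected_space T \<longleftrightarrow> (\<forall>S. connectedin T S \<longrightarrow> (\<exists>a. S \<subseteq> {a}))"

definition profinite_group :: "('g, 'b) monoid_scheme \<Rightarrow> 'g topology \<Rightarrow> bool" where
  "profinite_group G T \<longleftrightarrow> group G \<and> topspace T = carrier G
     \<and> continuous_map (prod_topology T T) T (\<lambda>(x, y). x \<otimes>\<^bsub>G\<^esub> y)
     \<and> continuous_map T T (\<lambda>x. inv\<^bsub>G\<^esub> x)
     \<and> compact_space T \<and> Hausdorff_space T \<and> totally_disconnected_space T"

text \<open>A discrete G-module: an abelian group (the type 'x) with a G-action by additive maps
  such that every stabiliser is open (equivalently, the action G x X -> X is continuous
  for the discrete topology on X).\<close>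
definition discrete_module ::
  "('g, 'b) monoid_scheme \<Rightarrow> 'g topology \<Rightarrow> ('g \<Rightarrow> 'x::ab_group_add \<Rightarrow> 'x) \<Rightarrow> bool" where
  "discrete_module G T act \<longleftrightarrow>
     (\<forall>x. act \<one>\<^bsub>G\<^esub> x = x)
   \<and> (\<forall>g\<in>carrier G. \<forall>h\<in>carrier G. \<forall>x. act (g \<otimes>\<^bsub>G\<^esub> h) x = act g (act h x))
   \<and> (\<forall>g\<in>carrier G. \<forall>x y. act g (x + y) = act g x + act g y)
   \<and> (\<forall>x. openin T {g \<in> carrier G. act g x = x})"

definition tuples :: "('g, 'b) monoid_scheme \<Rightarrow> nat \<Rightarrow> (nat \<Rightarrow> 'g) set" where
  "tuples G n = PiE {..n} (\<lambda>_. carrier G)"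

text \<open>Homogeneous continuous n-cochains for a subgroup K of G: continuous (= locally constant)
  maps G^(n+1) -> X that are K-equivariant for the diagonal left action; extended by 0.\<close>
definition cochain ::
  "('g, 'b) monoid_scheme \<Rightarrow> 'g topology \<Rightarrow> ('g \<Rightarrow> 'x::ab_group_add \<Rightarrow> 'x) \<Rightarrow> 'g set \<Rightarrow> nat
    \<Rightarrow> ((nat \<Rightarrow> 'g) \<Rightarrow> 'x) \<Rightarrow> bool" where
  "cochain G T act K n \<phi> \<longleftrightarrow>
     continuous_map (product_topology (\<lambda>_. T) {..n}) (discrete_topology UNIV) \<phi>
   \<and> (\<forall>g\<in>tuples G n. \<forall>k\<in>K. \<phi> (\<lambda>i\<in>{..n}. k \<otimes>\<^bsub>G\<^esub> g i) = act k (\<phi> g))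
   \<and> (\<forall>g. g \<notin> tuples G n \<longrightarrow> \<phi> g = 0)"

definition face :: "nat \<Rightarrow> nat \<Rightarrow> (nat \<Rightarrow> 'g) \<Rightarrow> (nat \<Rightarrow> 'g)" where
  "face n i g = (\<lambda>j\<in>{..n}. if j < i then g j else g (Suc j))"

definition cobound ::
  "('g, 'b) monoid_scheme \<Rightarrow> nat \<Rightarrow> ((nat \<Rightarrow> 'g) \<Rightarrow> 'x::ab_group_add) \<Rightarrow> ((nat \<Rightarrow> 'g) \<Rightarrow> 'x)" where
  "cobound G n \<phi> = (\<lambda>g. if g \<in> tuples G (Suc n)
      then (\<Sum>i\<le>Suc n. if even i then \<phi> (face n i g) else - \<phi> (face n i g)) else 0)"

definition cocycles ::
  "('g, 'b) monoid_scheme \<Rightarrow> 'g topology \<Rightarrow> ('g \<Rightarrow> 'x::ab_group_add \<Rightarrow> 'x) \<Rightarrow> 'g set \<Rightarrow> nat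
    \<Rightarrow> ((nat \<Rightarrow> 'g) \<Rightarrow> 'x) set" where
  "cocycles G T act K n = {\<phi>. cochain G T act K n \<phi> \<and> cobound G n \<phi> = (\<lambda>_. 0)}"

definition coboundaries ::
  "('g, 'b) monoid_scheme \<Rightarrow> 'g topology \<Rightarrow> ('g \<Rightarrow> 'x::ab_group_add \<Rightarrow> 'x) \<Rightarrow> 'g set \<Rightarrow> nat
    \<Rightarrow> ((nat \<Rightarrow> 'g) \<Rightarrow> 'x) set" where
  "coboundaries G T act K n = (case n of 0 \<Rightarrow> {\<lambda>_. 0}
      | Suc m \<Rightarrow> cobound G m ` {\<psi>. cochain G T act K m \<psi>})"

definition cls ::
  "('g, 'b) monoid_scheme \<Rightarrow> 'g topology \<Rightarrow> ('g \<Rightarrow> 'x::ab_group_add \<Rightarrow> 'x) \<Rightarrow> 'g set \<Rightarrow> nat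
    \<Rightarrow> ((nat \<Rightarrow> 'g) \<Rightarrow> 'x) \<Rightarrow> ((nat \<Rightarrow> 'g) \<Rightarrow> 'x) set" where
  "cls G T act K n \<phi> = {\<psi> \<in> cocycles G T act K n. (\<lambda>g. \<psi> g - \<phi> g) \<in> coboundaries G T act K n}"

definition coh ::
  "('g, 'b) monoid_scheme \<Rightarrow> 'g topology \<Rightarrow> ('g \<Rightarrow> 'x::ab_group_add \<Rightarrow> 'x) \<Rightarrow> 'g set \<Rightarrow> nat
    \<Rightarrow> ((nat \<Rightarrow> 'g) \<Rightarrow> 'x) set set" where
  "coh G T act K n = cls G T act K n ` cocycles G T act K n"

definition induced ::
  "('g, 'b) monoid_scheme \<Rightarrow> 'g topology \<Rightarrow> ('g \<Rightarrow> 'y::ab_group_add \<Rightarrow> 'y) \<Rightarrow> 'g set \<Rightarrow> nat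
    \<Rightarrow> (((nat \<Rightarrow> 'g) \<Rightarrow> 'x) \<Rightarrow> ((nat \<Rightarrow> 'g) \<Rightarrow> 'y)) \<Rightarrow> ((nat \<Rightarrow> 'g) \<Rightarrow> 'x) set
    \<Rightarrow> ((nat \<Rightarrow> 'g) \<Rightarrow> 'y) set" where
  "induced G T actB K' n F c = the_elem ((\<lambda>\<phi>. cls G T actB K' n (F \<phi>)) ` c)"

definition coh_map ::
  "('g, 'b) monoid_scheme \<Rightarrow> 'g topology \<Rightarrow> ('g \<Rightarrow> 'y::ab_group_add \<Rightarrow> 'y) \<Rightarrow> 'g set \<Rightarrow> nat
    \<Rightarrow> ('x::ab_group_add \<Rightarrow> 'y) \<Rightarrow> ((nat \<Rightarrow> 'g) \<Rightarrow> 'x) set \<Rightarrow> ((nat \<Rightarrow> 'g) \<Rightarrow> 'y) set" where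
  "coh_map G T actY K n f c = induced G T actY K n (\<lambda>\<phi>. f \<circ> \<phi>) c"

text \<open>Restriction H^n(G,X) -> H^n(H,X): the inclusion of G-equivariant into H-equivariant cochains.\<close>
definition Res ::
  "('g, 'b) monoid_scheme \<Rightarrow> 'g topology \<Rightarrow> ('g \<Rightarrow> 'x::ab_group_add \<Rightarrow> 'x) \<Rightarrow> 'g set \<Rightarrow> nat
    \<Rightarrow> ((nat \<Rightarrow> 'g) \<Rightarrow> 'x) set \<Rightarrow> ((nat \<Rightarrow> 'g) \<Rightarrow> 'x) set" where
  "Res G T act H n c = induced G T act H n id c"

definition lcos :: "('g, 'b) monoid_scheme \<Rightarrow> 'g set \<Rightarrow> 'g set set" where
  "lcos G H = {a <#\<^bsub>G\<^esub> H | a. a \<in> carrier G}"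

definition rep :: "'g set \<Rightarrow> 'g" where
  "rep C = (SOME r. r \<in> C)"

text \<open>Corestriction H^n(H,X) -> H^n(G,X): the norm map  phi |-> sum_{sigma in G/H} sigma . phi
  on H-equivariant cochains, (sigma . phi)(g) = sigma phi(sigma^-1 g).\<close>
definition norm_cochain ::
  "('g, 'b) monoid_scheme \<Rightarrow> ('g \<Rightarrow> 'x::ab_group_add \<Rightarrow> 'x) \<Rightarrow> 'g set \<Rightarrow> nat
    \<Rightarrow> ((nat \<Rightarrow> 'g) \<Rightarrow> 'x) \<Rightarrow> ((nat \<Rightarrow> 'g) \<Rightarrow> 'x)" where
  "norm_cochain G act H n \<phi> = (\<lambda>g. if g \<in> tuples G n
      then (\<Sum>C\<in>lcos G H. act (rep C) (\<phi> (\<lambda>i\<in>{..n}. inv\<^bsub>G\<^esub> (rep C) \<otimes>\<^bsub>G\<^esub> g i)))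
      else 0)"

definition Cor ::
  "('g, 'b) monoid_scheme \<Rightarrow> 'g topology \<Rightarrow> ('g \<Rightarrow> 'x::ab_group_add \<Rightarrow> 'x) \<Rightarrow> 'g set \<Rightarrow> nat
    \<Rightarrow> ((nat \<Rightarrow> 'g) \<Rightarrow> 'x) set \<Rightarrow> ((nat \<Rightarrow> 'g) \<Rightarrow> 'x) set" where
  "Cor G T act H n c = induced G T act (carrier G) n (norm_cochain G act H n) c"

definition tilde_map ::
  "('g, 'b) monoid_scheme \<Rightarrow> 'g set \<Rightarrow> ('g \<Rightarrow> 'x::ab_group_add \<Rightarrow> 'x) \<Rightarrow> ('g \<Rightarrow> 'y::ab_group_add \<Rightarrow> 'y)
    \<Rightarrow> ('x \<Rightarrow> 'y) \<Rightarrow> 'x \<Rightarrow> 'y" where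
  "tilde_map G H actX actY f x = (\<Sum>C\<in>lcos G H. actY (rep C) (f (actX (inv\<^bsub>G\<^esub> (rep C)) x)))"

end

theory Submission
  imports Defs
begin


lemma cont_disc_iff:
  "continuous_map X (discrete_topology UNIV) f \<longleftrightarrow> (\<forall>y. openin X {x \<in> topspace X. f x = y})"
proof
  assume A: "continuous_map X (discrete_topology UNIV) f"
  show "\<forall>y. openin X {x \<in> topspace X. f x = y}"
  proof
    fix y
    have "openin X {x \<in> topspace X. f x \<in> {y}}" using A unfolding continuous_map_def openin_discrete_topology by blast
    then show "openin X {x \<in> topspace X. f x = y}" by simp
  qed
next
  assume A: "\<forall>y. openin X {x \<in> topspace X. f x = y}"
  show "continuous_map X (discrete_topology UNIV) f"
    unfolding continuous_map_def
  proof (intro conjI allI impI)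
    fix U :: "'b set"
    have "{x \<in> topspace X. f x \<in> U} = (\<Union>y\<in>U. {x \<in> topspace X. f x = y})" by auto
    then show "openin X {x \<in> topspace X. f x \<in> U}" using A by (auto intro: openin_Union)
  qed auto
qed

lemma cont_disc_comp:
  assumes "continuous_map X (discrete_topology UNIV) f"
  shows "continuous_map X (discrete_topology UNIV) (\<lambda>x. h (f x))"
  using continuous_map_compose[OF assms, of "discrete_topology UNIV" h] by (simp add: o_def)

lemma cont_disc_add:
  fixes f g :: "'a \<Rightarrow> 'b::ab_group_add"
  assumes "continuous_map X (discrete_topology UNIV) f" "continuous_map X (discrete_topology UNIV) g"
  shows "continuous_map X (discrete_topology UNIV) (\<lambda>x. f x + g x)"
proof -
  have "openin X {x \<in> topspace X. f x + g x = y}" for y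
  proof -
    have "{x \<in> topspace X. f x + g x = y} = (\<Union>z. {x \<in> topspace X. f x = z} \<inter> {x \<in> topspace X. g x = y - z})"
      by (auto simp: algebra_simps)
    then show ?thesis using assms unfolding cont_disc_iff by (auto intro!: openin_Union openin_Int)
  qed
  then show ?thesis by (simp add: cont_disc_iff)
qed

lemma cont_disc_sum:
  fixes f :: "'c \<Rightarrow> 'a \<Rightarrow> 'b::ab_group_add"
  assumes "\<And>a. a \<in> A \<Longrightarrow> continuous_map X (discrete_topology UNIV) (f a)"
  shows "continuous_map X (discrete_topology UNIV) (\<lambda>x. \<Sum>a\<in>A. f a x)"
  using assms
proof (induction A rule: infinite_finite_induct)
  case (insert a F)
  then show ?case by (simp add: cont_disc_add)
qed auto

lemma tuples_top:
  assumes "topspace T = carrier G"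
  shows "topspace (product_topology (\<lambda>_. T) {..n}) = tuples G n"
  using assms by (simp add: tuples_def)

lemma lmul_cont:
  assumes P: "profinite_group G T" and a: "a \<in> carrier G"
  shows "continuous_map (product_topology (\<lambda>_. T) {..n}) (product_topology (\<lambda>_. T) {..n})
           (\<lambda>g. \<lambda>i\<in>{..n}. a \<otimes>\<^bsub>G\<^esub> g i)"
proof -
  have m: "continuous_map (prod_topology T T) T (\<lambda>(x, y). x \<otimes>\<^bsub>G\<^esub> y)"
    and top: "topspace T = carrier G" using P by (auto simp: profinite_group_def)
  have "continuous_map (product_topology (\<lambda>_. T) {..n}) T (\<lambda>g. a \<otimes>\<^bsub>G\<^esub> g k)" if "k \<in> {..n}" for k
  proof -
    have "continuous_map (product_topology (\<lambda>_. T) {..n}) (prod_topology T T) (\<lambda>g. (a, g k))"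
      by (rule continuous_map_pairedI) (simp_all add: top a that continuous_map_product_projection[OF that, where X="\<lambda>_. T"])
    from continuous_map_compose[OF this m] show ?thesis by (simp add: o_def)
  qed
  note * = this
  show ?thesis unfolding continuous_map_componentwise
  proof (intro conjI ballI)
    fix k assume "k \<in> {..n}"
    then show "continuous_map (product_topology (\<lambda>_. T) {..n}) T (\<lambda>x. (\<lambda>i\<in>{..n}. a \<otimes>\<^bsub>G\<^esub> x i) k)"
      using *[of k] by simp
  qed auto
qed

lemma lcos_rep:
  assumes G: "group G" and HG: "subgroup H G" and D: "D \<in> lcos G H"
  shows "rep D \<in> D" "D = rep D <#\<^bsub>G\<^esub> H" "rep D \<in> carrier G"
proof -
  obtain a where a: "a \<in> carrier G" "D = a <#\<^bsub>G\<^esub> H" using D by (auto simp: lcos_def)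
  have "a \<otimes>\<^bsub>G\<^esub> \<one>\<^bsub>G\<^esub> \<in> D" using a HG by (auto simp: l_coset_def subgroup.one_closed)
  then have "a \<in> D" using a G by (simp add: group.is_monoid monoid.r_one)
  then show r: "rep D \<in> D" unfolding rep_def by (rule someI)
  have sub: "H \<subseteq> carrier G" using HG by (simp add: subgroup.subset)
  show "rep D \<in> carrier G" using r a group.l_coset_subset_G[OF G sub a(1)] by auto
  show "D = rep D <#\<^bsub>G\<^esub> H" using group.l_repr_independence[OF G _ a(1) HG] r a by auto
qed

lemma lcos_shift:
  assumes G: "group G" and HG: "subgroup H G" and D: "D \<in> lcos G H" and k: "k \<in> carrier G"
  shows "k <#\<^bsub>G\<^esub> D \<in> lcos G H" "\<exists>h\<in>H. rep (k <#\<^bsub>G\<^esub> D) = k \<otimes>\<^bsub>G\<^esub> rep D \<otimes>\<^bsub>G\<^esub> h"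
proof -
  have sub: "H \<subseteq> carrier G" using HG by (simp add: subgroup.subset)
  have r: "rep D \<in> carrier G" "D = rep D <#\<^bsub>G\<^esub> H" using lcos_rep[OF G HG D] by auto
  have e: "k <#\<^bsub>G\<^esub> D = (k \<otimes>\<^bsub>G\<^esub> rep D) <#\<^bsub>G\<^esub> H"
    using group.lcos_m_assoc[OF G sub k r(1)] r(2) by simp
  have kr: "k \<otimes>\<^bsub>G\<^esub> rep D \<in> carrier G" using k r G by (simp add: group.is_monoid monoid.m_closed)
  show L: "k <#\<^bsub>G\<^esub> D \<in> lcos G H" using e kr by (auto simp: lcos_def)
  have "rep (k <#\<^bsub>G\<^esub> D) \<in> (k \<otimes>\<^bsub>G\<^esub> rep D) <#\<^bsub>G\<^esub> H" using lcos_rep(1)[OF G HG L] e by simp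
  then show "\<exists>h\<in>H. rep (k <#\<^bsub>G\<^esub> D) = k \<otimes>\<^bsub>G\<^esub> rep D \<otimes>\<^bsub>G\<^esub> h" by (auto simp: l_coset_def)
qed

lemma coset_sum_shift:
  assumes G: "group G" and HG: "subgroup H G" and k: "k \<in> carrier G"
    and t: "\<And>c h. c \<in> carrier G \<Longrightarrow> h \<in> H \<Longrightarrow> t (c \<otimes>\<^bsub>G\<^esub> h) = t c"
  shows "(\<Sum>C\<in>lcos G H. t (rep C)) = (\<Sum>C\<in>lcos G H. t (k \<otimes>\<^bsub>G\<^esub> rep C))"
proof -
  have sub: "H \<subseteq> carrier G" using HG by (simp add: subgroup.subset)
  have ik: "inv\<^bsub>G\<^esub> k \<in> carrier G" using G k by simp
  have Dsub: "D \<subseteq> carrier G" if "D \<in> lcos G H" for D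
    using that sub G group.l_coset_subset_G[OF G sub] by (auto simp: lcos_def)
  have "(\<Sum>C\<in>lcos G H. t (k \<otimes>\<^bsub>G\<^esub> rep C)) = (\<Sum>C\<in>lcos G H. t (rep C))"
  proof (rule sum.reindex_bij_witness[where i = "\<lambda>C. inv\<^bsub>G\<^esub> k <#\<^bsub>G\<^esub> C" and j = "\<lambda>C. k <#\<^bsub>G\<^esub> C"])
    fix C assume C: "C \<in> lcos G H"
    show "inv\<^bsub>G\<^esub> k <#\<^bsub>G\<^esub> (k <#\<^bsub>G\<^esub> C) = C"
      using group.lcos_m_assoc[OF G Dsub[OF C] ik k] G k group.lcos_mult_one[OF G Dsub[OF C]] group.l_inv[OF G k] by simp
    show "k <#\<^bsub>G\<^esub> C \<in> lcos G H" using lcos_shift[OF G HG C k] by simp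
    show "k <#\<^bsub>G\<^esub> (inv\<^bsub>G\<^esub> k <#\<^bsub>G\<^esub> C) = C"
      using group.lcos_m_assoc[OF G Dsub[OF C] k ik] G k group.lcos_mult_one[OF G Dsub[OF C]] group.r_inv[OF G k] by simp
    show "inv\<^bsub>G\<^esub> k <#\<^bsub>G\<^esub> C \<in> lcos G H" using lcos_shift[OF G HG C ik] by simp
    obtain h where h: "h \<in> H" "rep (k <#\<^bsub>G\<^esub> C) = k \<otimes>\<^bsub>G\<^esub> rep C \<otimes>\<^bsub>G\<^esub> h"
      using lcos_shift[OF G HG C k] by blast
    have "k \<otimes>\<^bsub>G\<^esub> rep C \<in> carrier G" using monoid.m_closed[OF group.is_monoid[OF G] k lcos_rep(3)[OF G HG C]] .
    then show "t (rep (k <#\<^bsub>G\<^esub> C)) = t (k \<otimes>\<^bsub>G\<^esub> rep C)" using h t by simp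
  qed
  then show ?thesis by simp
qed



lemma cochain_add:
  assumes A: "\<forall>k\<in>K. Modules.additive (act k)" and a: "cochain G T act K n a" and b: "cochain G T act K n b"
  shows "cochain G T act K n (\<lambda>g. a g + b g)"
  using a b unfolding cochain_def
  by (auto simp: cont_disc_add A Modules.additive.add)

lemma cochain_uminus:
  assumes A: "\<forall>k\<in>K. Modules.additive (act k)" and a: "cochain G T act K n a"
  shows "cochain G T act K n (\<lambda>g. - a g)"
  using a unfolding cochain_def
  by (auto simp: cont_disc_comp A Modules.additive.minus)

lemma cochain_zero:
  assumes A: "\<forall>k\<in>K. Modules.additive (act k)"
  shows "cochain G T act K n (\<lambda>g. 0)"
  unfolding cochain_def by (auto simp: A Modules.additive.zero)

lemma cobound_add: "cobound G n (\<lambda>g. a g + b g) = (\<lambda>g. cobound G n a g + cobound G n b g)"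
  unfolding cobound_def by (rule ext) (auto simp del: sum.atMost_Suc simp: sum.distrib[symmetric] intro!: sum.cong)

lemma cobound_uminus: "cobound G n (\<lambda>g. - a g) = (\<lambda>g. - cobound G n a g)"
  unfolding cobound_def by (rule ext) (auto simp del: sum.atMost_Suc simp: sum_negf[symmetric] intro!: sum.cong)

lemma cobound_zero: "cobound G n (\<lambda>g. 0::'x::ab_group_add) = (\<lambda>g. 0)"
  unfolding cobound_def by (rule ext) (simp only: minus_zero if_cancel sum.neutral_const)

lemma cobound_comp:
  assumes "Modules.additive f"
  shows "cobound G n (\<lambda>g. f (a g)) = (\<lambda>g. f (cobound G n a g))"
  unfolding cobound_def by (rule ext) (auto simp del: sum.atMost_Suc simp: Modules.additive.sum[OF assms] Modules.additive.zero[OF assms] Modules.additive.minus[OF assms]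
      intro!: sum.cong)

lemma cob_add:
  assumes A: "\<forall>k\<in>K. Modules.additive (act k)" and "a \<in> coboundaries G T act K n" "b \<in> coboundaries G T act K n"
  shows "(\<lambda>g. a g + b g) \<in> coboundaries G T act K n"
proof (cases n)
  case 0 then show ?thesis using assms by (simp add: coboundaries_def)
next
  case (Suc m)
  then obtain \<alpha> \<beta> where "cochain G T act K m \<alpha>" "a = cobound G m \<alpha>" "cochain G T act K m \<beta>" "b = cobound G m \<beta>"
    using assms by (auto simp: coboundaries_def)
  then show ?thesis using Suc cochain_add[OF A] cobound_add[of G m \<alpha> \<beta>]
    by (auto simp: coboundaries_def image_iff intro!: exI[of _ "\<lambda>g. \<alpha> g + \<beta> g"])
qed

lemma cob_uminus:
  assumes A: "\<forall>k\<in>K. Modules.additive (act k)" and "a \<in> coboundaries G T act K n"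
  shows "(\<lambda>g. - a g) \<in> coboundaries G T act K n"
proof (cases n)
  case 0 then show ?thesis using assms by (simp add: coboundaries_def)
next
  case (Suc m)
  then obtain \<alpha> where "cochain G T act K m \<alpha>" "a = cobound G m \<alpha>"
    using assms by (auto simp: coboundaries_def)
  then show ?thesis using Suc cochain_uminus[OF A] cobound_uminus[of G m \<alpha>]
    by (auto simp: coboundaries_def image_iff intro!: exI[of _ "\<lambda>g. - \<alpha> g"])
qed

lemma cob_zero:
  assumes A: "\<forall>k\<in>K. Modules.additive (act k)"
  shows "(\<lambda>g. 0) \<in> coboundaries G T act K n"
proof (cases n)
  case 0 then show ?thesis by (simp add: coboundaries_def)
next
  case (Suc m)
  then show ?thesis using cochain_zero[OF A]
    by (auto simp: coboundaries_def image_iff cobound_zero intro!: exI[of _ "\<lambda>g. 0"])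
qed

lemma cls_eq:
  assumes A: "\<forall>k\<in>K. Modules.additive (act k)"
    and ab: "(\<lambda>g. a g - b g) \<in> coboundaries G T act K n"
  shows "cls G T act K n a = cls G T act K n b"
proof -
  have ba: "(\<lambda>g. - (a g - b g)) \<in> coboundaries G T act K n" using cob_uminus[OF A ab] .
  have "(\<lambda>g. x g - a g) \<in> coboundaries G T act K n \<longleftrightarrow> (\<lambda>g. x g - b g) \<in> coboundaries G T act K n" for x
  proof
    assume "(\<lambda>g. x g - a g) \<in> coboundaries G T act K n"
    from cob_add[OF A this ab] show "(\<lambda>g. x g - b g) \<in> coboundaries G T act K n" by simp
  next
    assume "(\<lambda>g. x g - b g) \<in> coboundaries G T act K n"
    from cob_add[OF A this ba] show "(\<lambda>g. x g - a g) \<in> coboundaries G T act K n" by simp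
  qed
  then show ?thesis by (simp add: cls_def)
qed

lemma self_in_cls:
  assumes A: "\<forall>k\<in>K. Modules.additive (act k)" and a: "a \<in> cocycles G T act K n"
  shows "a \<in> cls G T act K n a"
  using a cob_zero[OF A] by (simp add: cls_def)

lemma induced_cls:
  assumes A: "\<forall>k\<in>K. Modules.additive (act k)" and phi: "\<phi> \<in> cocycles G T act K n"
    and eq: "\<And>\<psi>. \<psi> \<in> cls G T act K n \<phi> \<Longrightarrow> cls G T actB K' n (F \<psi>) = cls G T actB K' n (F \<phi>)"
  shows "induced G T actB K' n F (cls G T act K n \<phi>) = cls G T actB K' n (F \<phi>)"
proof -
  have "(\<lambda>\<psi>. cls G T actB K' n (F \<psi>)) ` cls G T act K n \<phi> = {cls G T actB K' n (F \<phi>)}"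
    using eq self_in_cls[OF A phi] by blast
  then show ?thesis by (simp add: induced_def)
qed

lemma cls_map:
  fixes F :: "nat \<Rightarrow> ((nat \<Rightarrow> 'g) \<Rightarrow> 'x::ab_group_add) \<Rightarrow> ((nat \<Rightarrow> 'g) \<Rightarrow> 'y::ab_group_add)"
  assumes AB: "\<forall>k\<in>K'. Modules.additive (actB k)"
    and pres: "\<And>m a. cochain G T act K m a \<Longrightarrow> cochain G T actB K' m (F m a)"
    and lin: "\<And>m a b. F m (\<lambda>g. a g - b g) = (\<lambda>g. F m a g - F m b g)"
    and comm: "\<And>m a. cochain G T act K m a \<Longrightarrow> cobound G m (F m a) = F (Suc m) (cobound G m a)"
    and zero: "\<And>m. F m (\<lambda>g. 0) = (\<lambda>g. 0)"
    and psi: "\<psi> \<in> cls G T act K n \<phi>"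
  shows "cls G T actB K' n (F n \<psi>) = cls G T actB K' n (F n \<phi>)"
proof -
  have d: "(\<lambda>g. \<psi> g - \<phi> g) \<in> coboundaries G T act K n" using psi by (simp add: cls_def)
  show ?thesis
  proof (cases n)
    case 0
    then have "(\<lambda>g. \<psi> g - \<phi> g) = (\<lambda>g. 0)" using d by (simp add: coboundaries_def)
    then have "\<psi> = \<phi>" by (metis eq_iff_diff_eq_0 ext)
    then show ?thesis by simp
  next
    case (Suc m)
    then obtain \<beta> where b: "cochain G T act K m \<beta>" "(\<lambda>g. \<psi> g - \<phi> g) = cobound G m \<beta>"
      using d by (auto simp: coboundaries_def)
    have "(\<lambda>g. F n \<psi> g - F n \<phi> g) = F n (\<lambda>g. \<psi> g - \<phi> g)" by (simp add: lin)
    also have "\<dots> = cobound G m (F m \<beta>)" using b comm Suc by simp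
    finally have "(\<lambda>g. F n \<psi> g - F n \<phi> g) \<in> coboundaries G T actB K' n"
      using pres[OF b(1)] Suc by (auto simp: coboundaries_def)
    then show ?thesis by (rule cls_eq[OF AB])
  qed
qed

lemma cocycle_map:
  fixes F :: "nat \<Rightarrow> ((nat \<Rightarrow> 'g) \<Rightarrow> 'x::ab_group_add) \<Rightarrow> ((nat \<Rightarrow> 'g) \<Rightarrow> 'y::ab_group_add)"
  assumes pres: "\<And>m a. cochain G T act K m a \<Longrightarrow> cochain G T actB K' m (F m a)"
    and comm: "\<And>m a. cochain G T act K m a \<Longrightarrow> cobound G m (F m a) = F (Suc m) (cobound G m a)"
    and zero: "\<And>m. F m (\<lambda>g. 0) = (\<lambda>g. 0)"
    and phi: "\<phi> \<in> cocycles G T act K n"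
  shows "F n \<phi> \<in> cocycles G T actB K' n"
  using phi pres comm zero by (simp add: cocycles_def)

lemma induced_map:
  fixes F :: "nat \<Rightarrow> ((nat \<Rightarrow> 'g) \<Rightarrow> 'x::ab_group_add) \<Rightarrow> ((nat \<Rightarrow> 'g) \<Rightarrow> 'y::ab_group_add)"
  assumes A: "\<forall>k\<in>K. Modules.additive (act k)" and AB: "\<forall>k\<in>K'. Modules.additive (actB k)"
    and pres: "\<And>m a. cochain G T act K m a \<Longrightarrow> cochain G T actB K' m (F m a)"
    and lin: "\<And>m a b. F m (\<lambda>g. a g - b g) = (\<lambda>g. F m a g - F m b g)"
    and comm: "\<And>m a. cochain G T act K m a \<Longrightarrow> cobound G m (F m a) = F (Suc m) (cobound G m a)"
    and zero: "\<And>m. F m (\<lambda>g. 0) = (\<lambda>g. 0)"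
    and phi: "\<phi> \<in> cocycles G T act K n"
  shows "induced G T actB K' n (F n) (cls G T act K n \<phi>) = cls G T actB K' n (F n \<phi>)"
  by (rule induced_cls[OF A phi]) (rule cls_map[OF AB pres lin comm zero])



lemma tuples_lmul:
  assumes "group G" "c \<in> carrier G" "g \<in> tuples G m"
  shows "(\<lambda>i\<in>{..m}. c \<otimes>\<^bsub>G\<^esub> g i) \<in> tuples G m"
proof -
  interpret group G by fact
  show ?thesis using assms(2,3) by (auto simp: tuples_def PiE_def Pi_def)
qed

lemma face_tuples:
  assumes "g \<in> tuples G (Suc m)" "i \<le> Suc m"
  shows "face m i g \<in> tuples G m"
  using assms by (auto simp: tuples_def face_def PiE_def Pi_def)

lemma face_lmul:
  "face m i (\<lambda>j\<in>{..Suc m}. c \<otimes>\<^bsub>G\<^esub> g j) = (\<lambda>j\<in>{..m}. c \<otimes>\<^bsub>G\<^esub> face m i g j)"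
  by (rule ext) (auto simp: face_def)

lemma norm_term_inv:
  assumes G: "group G" and HG: "subgroup H G"
    and comp: "\<forall>g\<in>carrier G. \<forall>h\<in>carrier G. \<forall>x. act (g \<otimes>\<^bsub>G\<^esub> h) x = act g (act h x)"
    and a: "cochain G T act H m a" and y: "y \<in> tuples G m"
    and c: "c \<in> carrier G" and h: "h \<in> H"
  shows "act (c \<otimes>\<^bsub>G\<^esub> h) (a (\<lambda>i\<in>{..m}. inv\<^bsub>G\<^esub> (c \<otimes>\<^bsub>G\<^esub> h) \<otimes>\<^bsub>G\<^esub> y i))
       = act c (a (\<lambda>i\<in>{..m}. inv\<^bsub>G\<^esub> c \<otimes>\<^bsub>G\<^esub> y i))"
proof -
  interpret group G by fact
  have hc: "h \<in> carrier G" by (rule subgroup.mem_carrier[OF HG h])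
  have ih: "inv\<^bsub>G\<^esub> h \<in> H" by (rule subgroup.m_inv_closed[OF HG h])
  have ihc: "inv\<^bsub>G\<^esub> h \<in> carrier G" using hc by simp
  define z where "z = (\<lambda>i\<in>{..m}. inv\<^bsub>G\<^esub> c \<otimes>\<^bsub>G\<^esub> y i)"
  have z: "z \<in> tuples G m" unfolding z_def using tuples_lmul[OF G _ y] c by simp
  have yc: "y i \<in> carrier G" if "i \<le> m" for i using y that by (auto simp: tuples_def)
  have eqv: "\<And>g k. g \<in> tuples G m \<Longrightarrow> k \<in> H \<Longrightarrow> a (\<lambda>i\<in>{..m}. k \<otimes>\<^bsub>G\<^esub> g i) = act k (a g)"
  proof -
    have "\<forall>g\<in>tuples G m. \<forall>k\<in>H. a (\<lambda>i\<in>{..m}. k \<otimes>\<^bsub>G\<^esub> g i) = act k (a g)"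
      using a unfolding cochain_def by (rule conjunct1[OF conjunct2])
    then show "\<And>g k. g \<in> tuples G m \<Longrightarrow> k \<in> H \<Longrightarrow> a (\<lambda>i\<in>{..m}. k \<otimes>\<^bsub>G\<^esub> g i) = act k (a g)"
      by blast
  qed
  have e1: "(\<lambda>i\<in>{..m}. inv\<^bsub>G\<^esub> (c \<otimes>\<^bsub>G\<^esub> h) \<otimes>\<^bsub>G\<^esub> y i) = (\<lambda>i\<in>{..m}. inv\<^bsub>G\<^esub> h \<otimes>\<^bsub>G\<^esub> z i)"
  proof (rule restrict_ext)
    fix i assume i: "i \<in> {..m}"
    have "inv\<^bsub>G\<^esub> (c \<otimes>\<^bsub>G\<^esub> h) \<otimes>\<^bsub>G\<^esub> y i = inv\<^bsub>G\<^esub> h \<otimes>\<^bsub>G\<^esub> (inv\<^bsub>G\<^esub> c \<otimes>\<^bsub>G\<^esub> y i)"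
      using c hc yc i by (simp add: inv_mult_group m_assoc)
    then show "inv\<^bsub>G\<^esub> (c \<otimes>\<^bsub>G\<^esub> h) \<otimes>\<^bsub>G\<^esub> y i = inv\<^bsub>G\<^esub> h \<otimes>\<^bsub>G\<^esub> z i"
      using i by (simp add: z_def)
  qed
  have "act (c \<otimes>\<^bsub>G\<^esub> h) (a (\<lambda>i\<in>{..m}. inv\<^bsub>G\<^esub> (c \<otimes>\<^bsub>G\<^esub> h) \<otimes>\<^bsub>G\<^esub> y i))
      = act (c \<otimes>\<^bsub>G\<^esub> h) (act (inv\<^bsub>G\<^esub> h) (a z))"
    by (simp only: e1 eqv[OF z ih])
  also have "\<dots> = act (c \<otimes>\<^bsub>G\<^esub> h \<otimes>\<^bsub>G\<^esub> inv\<^bsub>G\<^esub> h) (a z)"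
    by (rule comp[rule_format, OF m_closed[OF c hc] ihc, symmetric])
  also have "c \<otimes>\<^bsub>G\<^esub> h \<otimes>\<^bsub>G\<^esub> inv\<^bsub>G\<^esub> h = c" using c hc by (simp add: m_assoc)
  finally show ?thesis by (simp only: z_def)
qed

lemma norm_equiv:
  assumes G: "group G" and HG: "subgroup H G"
    and comp: "\<forall>g\<in>carrier G. \<forall>h\<in>carrier G. \<forall>x. act (g \<otimes>\<^bsub>G\<^esub> h) x = act g (act h x)"
    and A: "\<forall>k\<in>carrier G. Modules.additive (act k)"
    and a: "cochain G T act H m a" and g: "g \<in> tuples G m" and k: "k \<in> carrier G"
  shows "norm_cochain G act H m a (\<lambda>i\<in>{..m}. k \<otimes>\<^bsub>G\<^esub> g i) = act k (norm_cochain G act H m a g)"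
proof -
  interpret group G by fact
  define y where "y = (\<lambda>i\<in>{..m}. k \<otimes>\<^bsub>G\<^esub> g i)"
  have y: "y \<in> tuples G m" unfolding y_def using tuples_lmul[OF G k g] .
  have gc: "g i \<in> carrier G" if "i \<le> m" for i using g that by (auto simp: tuples_def)
  define t where "t = (\<lambda>c. act c (a (\<lambda>i\<in>{..m}. inv\<^bsub>G\<^esub> c \<otimes>\<^bsub>G\<^esub> y i)))"
  have "norm_cochain G act H m a y = (\<Sum>C\<in>lcos G H. t (rep C))"
    using y by (simp add: norm_cochain_def t_def)
  also have "\<dots> = (\<Sum>C\<in>lcos G H. t (k \<otimes>\<^bsub>G\<^esub> rep C))"
    by (rule coset_sum_shift[OF G HG k]) (simp add: t_def norm_term_inv[OF G HG comp a y])
  also have "\<dots> = (\<Sum>C\<in>lcos G H. act k (act (rep C) (a (\<lambda>i\<in>{..m}. inv\<^bsub>G\<^esub> (rep C) \<otimes>\<^bsub>G\<^esub> g i))))"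
  proof (rule sum.cong)
    fix C assume C: "C \<in> lcos G H"
    have r: "rep C \<in> carrier G" using lcos_rep[OF G HG C] by simp
    have "(\<lambda>i\<in>{..m}. inv\<^bsub>G\<^esub> (k \<otimes>\<^bsub>G\<^esub> rep C) \<otimes>\<^bsub>G\<^esub> y i) = (\<lambda>i\<in>{..m}. inv\<^bsub>G\<^esub> (rep C) \<otimes>\<^bsub>G\<^esub> g i)"
    proof (rule restrict_ext)
      fix i assume "i \<in> {..m}"
      then have gi: "g i \<in> carrier G" using gc by simp
      have e: "inv\<^bsub>G\<^esub> k \<otimes>\<^bsub>G\<^esub> (k \<otimes>\<^bsub>G\<^esub> g i) = g i"
        using k gi by (simp add: m_assoc[symmetric])
      have "inv\<^bsub>G\<^esub> (k \<otimes>\<^bsub>G\<^esub> rep C) \<otimes>\<^bsub>G\<^esub> (k \<otimes>\<^bsub>G\<^esub> g i)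
          = inv\<^bsub>G\<^esub> (rep C) \<otimes>\<^bsub>G\<^esub> g i"
        using r k gi by (simp add: inv_mult_group m_assoc e)
      then show "inv\<^bsub>G\<^esub> (k \<otimes>\<^bsub>G\<^esub> rep C) \<otimes>\<^bsub>G\<^esub> y i = inv\<^bsub>G\<^esub> (rep C) \<otimes>\<^bsub>G\<^esub> g i"
        using k gi \<open>i \<in> {..m}\<close> by (simp add: y_def)
    qed
    then show "t (k \<otimes>\<^bsub>G\<^esub> rep C) = act k (act (rep C) (a (\<lambda>i\<in>{..m}. inv\<^bsub>G\<^esub> (rep C) \<otimes>\<^bsub>G\<^esub> g i)))"
      using comp k r by (simp add: t_def)
  qed simp
  also have "\<dots> = act k (norm_cochain G act H m a g)"
    using g A k by (simp add: norm_cochain_def Modules.additive.sum)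
  finally show ?thesis by (simp add: y_def)
qed

lemma norm_pres:
  assumes P: "profinite_group G T" and HG: "subgroup H G"
    and comp: "\<forall>g\<in>carrier G. \<forall>h\<in>carrier G. \<forall>x. act (g \<otimes>\<^bsub>G\<^esub> h) x = act g (act h x)"
    and A: "\<forall>k\<in>carrier G. Modules.additive (act k)"
    and a: "cochain G T act H m a"
  shows "cochain G T act (carrier G) m (norm_cochain G act H m a)"
proof -
  have G: "group G" and top: "topspace T = carrier G" using P by (auto simp: profinite_group_def)
  interpret group G by fact
  have ac: "continuous_map (product_topology (\<lambda>_. T) {..m}) (discrete_topology UNIV) a"
    using a by (simp add: cochain_def)
  have "continuous_map (product_topology (\<lambda>_. T) {..m}) (discrete_topology UNIV)
          (\<lambda>g. \<Sum>C\<in>lcos G H. act (rep C) (a (\<lambda>i\<in>{..m}. inv\<^bsub>G\<^esub> (rep C) \<otimes>\<^bsub>G\<^esub> g i)))"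
  proof (rule cont_disc_sum)
    fix C assume C: "C \<in> lcos G H"
    have r: "inv\<^bsub>G\<^esub> (rep C) \<in> carrier G" using lcos_rep[OF G HG C] by simp
    have c1: "continuous_map (product_topology (\<lambda>_. T) {..m}) (discrete_topology UNIV)
          (\<lambda>g. a (\<lambda>i\<in>{..m}. inv\<^bsub>G\<^esub> (rep C) \<otimes>\<^bsub>G\<^esub> g i))"
      using continuous_map_compose[OF lmul_cont[OF P r] ac] by (simp add: o_def)
    show "continuous_map (product_topology (\<lambda>_. T) {..m}) (discrete_topology UNIV)
          (\<lambda>g. act (rep C) (a (\<lambda>i\<in>{..m}. inv\<^bsub>G\<^esub> (rep C) \<otimes>\<^bsub>G\<^esub> g i)))"
      using cont_disc_comp[OF c1] .
  qed
  then have "continuous_map (product_topology (\<lambda>_. T) {..m}) (discrete_topology UNIV) (norm_cochain G act H m a)"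
  proof (rule continuous_map_eq)
    fix x assume "x \<in> topspace (product_topology (\<lambda>_. T) {..m})"
    then have "x \<in> tuples G m" using tuples_top[OF top] by simp
    then show "(\<Sum>C\<in>lcos G H. act (rep C) (a (\<lambda>i\<in>{..m}. inv\<^bsub>G\<^esub> (rep C) \<otimes>\<^bsub>G\<^esub> x i))) = norm_cochain G act H m a x"
      by (simp add: norm_cochain_def)
  qed
  moreover have "\<forall>g. g \<notin> tuples G m \<longrightarrow> norm_cochain G act H m a g = 0"
    by (simp add: norm_cochain_def)
  ultimately show ?thesis
    unfolding cochain_def using norm_equiv[OF G HG comp A a] by blast
qed

lemma norm_lin:
  assumes G: "group G" and HG: "subgroup H G" and A: "\<forall>k\<in>carrier G. Modules.additive (act k)"
  shows "norm_cochain G act H m (\<lambda>g. a g - b g) = (\<lambda>g. norm_cochain G act H m a g - norm_cochain G act H m b g)"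
proof -
  have "act (rep C) (x - y) = act (rep C) x - act (rep C) y" if "C \<in> lcos G H" for C x y
    using A lcos_rep(3)[OF G HG that] by (simp add: Modules.additive.diff)
  then show ?thesis by (auto simp: norm_cochain_def sum_subtractf[symmetric] intro!: sum.cong)
qed

lemma norm_zero:
  assumes G: "group G" and HG: "subgroup H G" and A: "\<forall>k\<in>carrier G. Modules.additive (act k)"
  shows "norm_cochain G act H m (\<lambda>g. 0) = (\<lambda>g. 0)"
proof -
  have "act (rep C) 0 = 0" if "C \<in> lcos G H" for C
    using A lcos_rep(3)[OF G HG that] by (simp add: Modules.additive.zero)
  then show ?thesis by (auto simp: norm_cochain_def intro!: sum.neutral)
qed

lemma norm_comm:
  assumes G: "group G" and HG: "subgroup H G" and A: "\<forall>k\<in>carrier G. Modules.additive (act k)"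
  shows "cobound G m (norm_cochain G act H m a) = norm_cochain G act H (Suc m) (cobound G m a)"
proof (rule ext)
  fix g
  interpret group G by fact
  show "cobound G m (norm_cochain G act H m a) g = norm_cochain G act H (Suc m) (cobound G m a) g"
  proof (cases "g \<in> tuples G (Suc m)")
    case False then show ?thesis by (simp add: cobound_def norm_cochain_def)
  next
    case True
    have add: "Modules.additive (act (rep C))" if "C \<in> lcos G H" for C
      using A lcos_rep(3)[OF G HG that] by simp
    have "cobound G m (norm_cochain G act H m a) g =
      (\<Sum>i\<le>Suc m. \<Sum>C\<in>lcos G H. if even i then act (rep C) (a (\<lambda>j\<in>{..m}. inv\<^bsub>G\<^esub> (rep C) \<otimes>\<^bsub>G\<^esub> face m i g j))
          else - act (rep C) (a (\<lambda>j\<in>{..m}. inv\<^bsub>G\<^esub> (rep C) \<otimes>\<^bsub>G\<^esub> face m i g j)))"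
      using True face_tuples[OF True]
      by (auto simp: cobound_def norm_cochain_def sum_negf simp del: sum.atMost_Suc intro!: sum.cong)
    also have "\<dots> = (\<Sum>C\<in>lcos G H. \<Sum>i\<le>Suc m. if even i then act (rep C) (a (\<lambda>j\<in>{..m}. inv\<^bsub>G\<^esub> (rep C) \<otimes>\<^bsub>G\<^esub> face m i g j))
          else - act (rep C) (a (\<lambda>j\<in>{..m}. inv\<^bsub>G\<^esub> (rep C) \<otimes>\<^bsub>G\<^esub> face m i g j)))"
      by (rule sum.swap)
    also have "\<dots> = norm_cochain G act H (Suc m) (cobound G m a) g"
    proof -
      have "(\<lambda>j\<in>{..Suc m}. inv\<^bsub>G\<^esub> (rep C) \<otimes>\<^bsub>G\<^esub> g j) \<in> tuples G (Suc m)" if "C \<in> lcos G H" for C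
        using tuples_lmul[OF G _ True] lcos_rep(3)[OF G HG that] by simp
      then show ?thesis using True
        by (auto simp: cobound_def norm_cochain_def face_lmul Modules.additive.sum[OF add]
            Modules.additive.minus[OF add] simp del: sum.atMost_Suc intro!: sum.cong)
    qed
    finally show ?thesis .
  qed
qed



lemma tilde_add:
  assumes G: "group G" and HG: "subgroup H G"
    and AX: "\<forall>k\<in>carrier G. Modules.additive (actX k)" and AY: "\<forall>k\<in>carrier G. Modules.additive (actY k)"
    and f: "Modules.additive f"
  shows "Modules.additive (tilde_map G H actX actY f)"
proof
  fix x y
  have "actY (rep C) (f (actX (inv\<^bsub>G\<^esub> rep C) (x + y))) =
        actY (rep C) (f (actX (inv\<^bsub>G\<^esub> rep C) x)) + actY (rep C) (f (actX (inv\<^bsub>G\<^esub> rep C) y))"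
    if C: "C \<in> lcos G H" for C
  proof -
    have r: "rep C \<in> carrier G" "inv\<^bsub>G\<^esub> rep C \<in> carrier G" using lcos_rep[OF G HG C] G by auto
    then show ?thesis using AX AY Modules.additive.add[OF f] by (simp add: Modules.additive.add)
  qed
  then show "tilde_map G H actX actY f (x + y) = tilde_map G H actX actY f x + tilde_map G H actX actY f y"
    by (simp add: tilde_map_def sum.distrib[symmetric])
qed

lemma tilde_equiv:
  assumes G: "group G" and HG: "subgroup H G"
    and dX: "discrete_module G T actX" and dY: "discrete_module G T actY"
    and fH: "\<And>h x. h \<in> H \<Longrightarrow> f (actX h x) = actY h (f x)"
    and k: "k \<in> carrier G"
  shows "tilde_map G H actX actY f (actX k x) = actY k (tilde_map G H actX actY f x)"
proof -
  interpret group G by fact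
  have oneY: "\<And>x. actY \<one>\<^bsub>G\<^esub> x = x" and compY: "\<forall>g\<in>carrier G. \<forall>h\<in>carrier G. \<forall>x. actY (g \<otimes>\<^bsub>G\<^esub> h) x = actY g (actY h x)"
    and addY: "\<forall>g\<in>carrier G. \<forall>x y. actY g (x + y) = actY g x + actY g y"
    using dY by (auto simp: discrete_module_def)
  have oneX: "\<And>x. actX \<one>\<^bsub>G\<^esub> x = x" and compX: "\<forall>g\<in>carrier G. \<forall>h\<in>carrier G. \<forall>x. actX (g \<otimes>\<^bsub>G\<^esub> h) x = actX g (actX h x)"
    using dX by (auto simp: discrete_module_def)
  define t where "t = (\<lambda>c. actY c (f (actX (inv\<^bsub>G\<^esub> c) (actX k x))))"
  have tinv: "t (c \<otimes>\<^bsub>G\<^esub> h) = t c" if c: "c \<in> carrier G" and h: "h \<in> H" for c h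
  proof -
    have hc: "h \<in> carrier G" by (rule subgroup.mem_carrier[OF HG h])
    have ih: "inv\<^bsub>G\<^esub> h \<in> H" by (rule subgroup.m_inv_closed[OF HG h])
    have ihc: "inv\<^bsub>G\<^esub> h \<in> carrier G" using hc by simp
    define w where "w = actX (inv\<^bsub>G\<^esub> c) (actX k x)"
    have "actX (inv\<^bsub>G\<^esub> (c \<otimes>\<^bsub>G\<^esub> h)) (actX k x) = actX (inv\<^bsub>G\<^esub> h) w"
      using c hc compX by (simp add: inv_mult_group w_def)
    then have "t (c \<otimes>\<^bsub>G\<^esub> h) = actY (c \<otimes>\<^bsub>G\<^esub> h) (actY (inv\<^bsub>G\<^esub> h) (f w))"
      using fH[OF ih] by (simp add: t_def)
    also have "\<dots> = actY ((c \<otimes>\<^bsub>G\<^esub> h) \<otimes>\<^bsub>G\<^esub> inv\<^bsub>G\<^esub> h) (f w)"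
      by (rule compY[rule_format, OF m_closed[OF c hc] ihc, symmetric])
    also have "(c \<otimes>\<^bsub>G\<^esub> h) \<otimes>\<^bsub>G\<^esub> inv\<^bsub>G\<^esub> h = c" using c hc by (simp add: m_assoc)
    finally show ?thesis by (simp add: t_def w_def)
  qed
  have "tilde_map G H actX actY f (actX k x) = (\<Sum>C\<in>lcos G H. t (rep C))"
    by (simp add: tilde_map_def t_def)
  also have "\<dots> = (\<Sum>C\<in>lcos G H. t (k \<otimes>\<^bsub>G\<^esub> rep C))"
    by (rule coset_sum_shift[OF G HG k]) (rule tinv)
  also have "\<dots> = (\<Sum>C\<in>lcos G H. actY k (actY (rep C) (f (actX (inv\<^bsub>G\<^esub> rep C) x))))"
  proof (rule sum.cong)
    fix C assume C: "C \<in> lcos G H"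
    have r: "rep C \<in> carrier G" using lcos_rep[OF G HG C] by simp
    have ik: "actX (inv\<^bsub>G\<^esub> k) (actX k x) = x"
      using compX[rule_format, of "inv\<^bsub>G\<^esub> k" k x] k oneX by simp
    have "actX (inv\<^bsub>G\<^esub> (k \<otimes>\<^bsub>G\<^esub> rep C)) (actX k x) = actX (inv\<^bsub>G\<^esub> rep C) x"
      using r k compX ik by (simp add: inv_mult_group)
    then show "t (k \<otimes>\<^bsub>G\<^esub> rep C) = actY k (actY (rep C) (f (actX (inv\<^bsub>G\<^esub> rep C) x)))"
      using compY k r by (simp add: t_def)
  qed simp
  also have "\<dots> = actY k (tilde_map G H actX actY f x)"
    using addY k by (simp add: tilde_map_def Modules.additive.sum Modules.additive_def)
  finally show ?thesis .
qed

lemma norm_comp_eq_tilde: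
  assumes G: "group G" and HG: "subgroup H G"
    and AX: "\<forall>k\<in>carrier G. Modules.additive (actX k)" and AY: "\<forall>k\<in>carrier G. Modules.additive (actY k)"
    and f: "Modules.additive f"
    and phi: "cochain G T actX (carrier G) n \<phi>"
  shows "norm_cochain G actY H n (f \<circ> \<phi>) = tilde_map G H actX actY f \<circ> \<phi>"
proof (rule ext)
  fix g
  interpret group G by fact
  show "norm_cochain G actY H n (f \<circ> \<phi>) g = (tilde_map G H actX actY f \<circ> \<phi>) g"
  proof (cases "g \<in> tuples G n")
    case True
    have eqv: "\<forall>g\<in>tuples G n. \<forall>k\<in>carrier G. \<phi> (\<lambda>i\<in>{..n}. k \<otimes>\<^bsub>G\<^esub> g i) = actX k (\<phi> g)"
      using phi unfolding cochain_def by (rule conjunct1[OF conjunct2])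
    have "\<phi> (\<lambda>i\<in>{..n}. inv\<^bsub>G\<^esub> rep C \<otimes>\<^bsub>G\<^esub> g i) = actX (inv\<^bsub>G\<^esub> rep C) (\<phi> g)" if "C \<in> lcos G H" for C
      using eqv True lcos_rep(3)[OF G HG that] by simp
    then show ?thesis using True by (simp add: norm_cochain_def tilde_map_def)
  next
    case False
    then have "\<phi> g = 0" using phi by (simp add: cochain_def)
    moreover have "tilde_map G H actX actY f 0 = 0"
      using tilde_add[OF G HG AX AY f] by (rule Modules.additive.zero)
    ultimately show ?thesis using False by (simp add: norm_cochain_def)
  qed
qed



theorem lemma6p4:
  fixes G :: "('g, 'b) monoid_scheme" and T :: "'g topology" and H :: "'g set"
    and actX :: "'g \<Rightarrow> 'x::ab_group_add \<Rightarrow> 'x" and actY :: "'g \<Rightarrow> 'y::ab_group_add \<Rightarrow> 'y"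
    and f :: "'x \<Rightarrow> 'y" and n :: nat and \<sigma> :: "((nat \<Rightarrow> 'g) \<Rightarrow> 'x) set"
  assumes "profinite_group G T"
    and "subgroup H G" and "openin T H"
    and "discrete_module G T actX" and "discrete_module G T actY"
    and "\<And>x y. f (x + y) = f x + f y"
    and "\<And>h x. h \<in> H \<Longrightarrow> f (actX h x) = actY h (f x)"
    and "\<sigma> \<in> coh G T actX (carrier G) n"
  shows "Cor G T actY H n (coh_map G T actY H n f (Res G T actX H n \<sigma>))
         = coh_map G T actY (carrier G) n (tilde_map G H actX actY f) \<sigma>"
proof -
  have P: "profinite_group G T" and HG: "subgroup H G" and dX: "discrete_module G T actX"
    and dY: "discrete_module G T actY" and fH: "\<And>h x. h \<in> H \<Longrightarrow> f (actX h x) = actY h (f x)"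
    using assms(1,2,4,5,7) by auto
  have G: "group G" using P by (simp add: profinite_group_def)
  have sub: "H \<subseteq> carrier G" using HG by (rule subgroup.subset)
  have f: "Modules.additive f" using assms(6) by (simp add: Modules.additive_def)
  have AX: "\<forall>k\<in>carrier G. Modules.additive (actX k)" using dX by (simp add: discrete_module_def Modules.additive_def)
  have AY: "\<forall>k\<in>carrier G. Modules.additive (actY k)" using dY by (simp add: discrete_module_def Modules.additive_def)
  have AXH: "\<forall>k\<in>H. Modules.additive (actX k)" using AX sub by (simp add: subset_iff)
  have AYH: "\<forall>k\<in>H. Modules.additive (actY k)" using AY sub by (simp add: subset_iff)
  have compY: "\<forall>g\<in>carrier G. \<forall>h\<in>carrier G. \<forall>x. actY (g \<otimes>\<^bsub>G\<^esub> h) x = actY g (actY h x)"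
    using dY by (simp add: discrete_module_def)
  have tadd: "Modules.additive (tilde_map G H actX actY f)" by (rule tilde_add[OF G HG AX AY f])
  obtain \<phi> where phi: "\<phi> \<in> cocycles G T actX (carrier G) n" and sig: "\<sigma> = cls G T actX (carrier G) n \<phi>"
    using assms(8) by (auto simp: coh_def)
  have phic: "cochain G T actX (carrier G) n \<phi>" using phi by (simp add: cocycles_def)

  have presR: "cochain G T actX H m a" if "cochain G T actX (carrier G) m a" for m a
    using that sub unfolding cochain_def by auto
  have R: "Res G T actX H n \<sigma> = cls G T actX H n \<phi>"
    using induced_map[where F="\<lambda>m. id", OF AX AXH presR _ _ _ phi] by (simp add: Res_def sig)
  have phiH: "\<phi> \<in> cocycles G T actX H n"
    using cocycle_map[where F="\<lambda>m. id", OF presR _ _ phi] by simp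

  have presF: "cochain G T actY H m (f \<circ> a)" if a: "cochain G T actX H m a" for m a
  proof -
    have "continuous_map (product_topology (\<lambda>_. T) {..m}) (discrete_topology UNIV) a"
      using a by (simp add: cochain_def)
    then have "continuous_map (product_topology (\<lambda>_. T) {..m}) (discrete_topology UNIV) (\<lambda>x. f (a x))"
      by (rule cont_disc_comp)
    then show ?thesis using a fH Modules.additive.zero[OF f] by (simp add: cochain_def o_def)
  qed
  have linF: "f \<circ> (\<lambda>g. a g - b g) = (\<lambda>g. (f \<circ> a) g - (f \<circ> b) g)" for a b
    by (simp add: o_def Modules.additive.diff[OF f])
  have commF: "cobound G m (f \<circ> a) = f \<circ> cobound G m a" for m a
    using cobound_comp[OF f, of G m a] by (simp add: o_def)
  have zeroF: "f \<circ> (\<lambda>g. 0) = (\<lambda>g. 0)" by (simp add: o_def Modules.additive.zero[OF f])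
  have F: "coh_map G T actY H n f (cls G T actX H n \<phi>) = cls G T actY H n (f \<circ> \<phi>)"
    using induced_map[where F="\<lambda>m a. f \<circ> a", OF AXH AYH presF linF commF zeroF phiH]
    by (simp add: coh_map_def)
  have fphi: "f \<circ> \<phi> \<in> cocycles G T actY H n"
    using cocycle_map[where F="\<lambda>m a. f \<circ> a", OF presF commF zeroF phiH] by simp

  have C: "Cor G T actY H n (cls G T actY H n (f \<circ> \<phi>)) = cls G T actY (carrier G) n (norm_cochain G actY H n (f \<circ> \<phi>))"
    using induced_map[where F="\<lambda>m. norm_cochain G actY H m", OF AYH AY norm_pres[OF P HG compY AY]
        norm_lin[OF G HG AY] norm_comm[OF G HG AY] norm_zero[OF G HG AY] fphi]
    by (simp add: Cor_def)

  have presT: "cochain G T actY (carrier G) m (tilde_map G H actX actY f \<circ> a)"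
    if a: "cochain G T actX (carrier G) m a" for m a
  proof -
    have "continuous_map (product_topology (\<lambda>_. T) {..m}) (discrete_topology UNIV) a"
      using a by (simp add: cochain_def)
    then have "continuous_map (product_topology (\<lambda>_. T) {..m}) (discrete_topology UNIV)
        (\<lambda>x. tilde_map G H actX actY f (a x))"
      by (rule cont_disc_comp)
    then show ?thesis using a tilde_equiv[where f=f, OF G HG dX dY fH] Modules.additive.zero[OF tadd]
      by (simp add: cochain_def o_def)
  qed
  have linT: "tilde_map G H actX actY f \<circ> (\<lambda>g. a g - b g)
      = (\<lambda>g. (tilde_map G H actX actY f \<circ> a) g - (tilde_map G H actX actY f \<circ> b) g)" for a b
    by (simp add: o_def Modules.additive.diff[OF tadd])
  have commT: "cobound G m (tilde_map G H actX actY f \<circ> a) = tilde_map G H actX actY f \<circ> cobound G m a" for m a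
    using cobound_comp[OF tadd, of G m a] by (simp add: o_def)
  have zeroT: "tilde_map G H actX actY f \<circ> (\<lambda>g. 0) = (\<lambda>g. 0)" by (simp add: o_def Modules.additive.zero[OF tadd])
  have TT: "coh_map G T actY (carrier G) n (tilde_map G H actX actY f) \<sigma>
      = cls G T actY (carrier G) n (tilde_map G H actX actY f \<circ> \<phi>)"
    using induced_map[where F="\<lambda>m a. tilde_map G H actX actY f \<circ> a", OF AX AY presT linT commT zeroT phi]
    by (simp add: coh_map_def sig)

  show ?thesis
    using R F C TT norm_comp_eq_tilde[OF G HG AX AY f phic] by simp
qed

end
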